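(* Let $k \ge 2$ be a prime number. For integers $i \ge 1$ let $m_i = k^{i-1}(k-1)$ and define $0/1$ vectors $v_i$ of length $m_i$ recursively: $v_1$ is the all-zero vector of length $k-1$, and $v_{i+1}$ is the concatenation of $k-1$ copies of the block $(v_i, 1, \dots, 1)$, where the block consists of $v_i$ followed by $k^{i-1}$ ones. Index the entries of $v_i$ by $0,1,\dots,m_i-1$, let $S$ be the support of $v_i$ (the set of indices of entries equal to $1$), and let $n_i = \frac{(k-2)k^i + 1}{k-1}$. Then there are no integers $r \ge 0$, $s > 0$ with $r + s(k-1) < n_i$ such that $\{r, r+s, r+2s, \dots, r+(k-1)s\} \cap S = \emptyset$. *)

theory Defs
  imports "HOL-Computational_Algebra.Primes"
begin

text \<open>The 0/1 vectors v_i (i >= 1) as lists of naturals; index 0 is unused.\<close>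
fun vvec :: "nat \<Rightarrow> nat \<Rightarrow> nat list" where
  "vvec k 0 = []"
| "vvec k (Suc 0) = replicate (k - 1) 0"
| "vvec k (Suc (Suc i)) = concat (replicate (k - 1) (vvec k (Suc i) @ replicate (k ^ i) 1))"

definition supp_v :: "nat \<Rightarrow> nat \<Rightarrow> nat set" where
  "supp_v k i = {j. j < length (vvec k i) \<and> vvec k i ! j = 1}"

definition n_val :: "nat \<Rightarrow> nat \<Rightarrow> nat" where
  "n_val k i = ((k - 2) * k ^ i + 1) div (k - 1)"

end

theory Submission
  imports Defs
begin

lemma nth_concat_replicate:
  "j < n * length xs \<Longrightarrow> concat (replicate n xs) ! j = xs ! (j mod length xs)"
proof (induction n arbitrary: j)
  case 0 then show ?case by simp
next
  case (Suc n)
  show ?case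
  proof (cases "j < length xs")
    case True then show ?thesis by (simp add: nth_append)
  next
    case False
    then have "j - length xs < n * length xs" using Suc.prems by simp
    then have "concat (replicate n xs) ! (j - length xs) = xs ! ((j - length xs) mod length xs)"
      using Suc.IH by blast
    moreover have "(j - length xs) mod length xs = j mod length xs"
      using False by (simp add: le_mod_geq)
    moreover have "length (concat (replicate n xs)) = n * length xs"
      by (simp add: length_concat sum_list_replicate)
    ultimately show ?thesis using False by (simp add: nth_append)
  qed
qed

lemma digit_mod:
  fixes j k a b :: nat
  assumes h: "a < b" "k > 0"
  shows "(j mod k ^ b) div k ^ a mod k = j div k ^ a mod k"
proof -
  have e: "k ^ b = k ^ a * k ^ (b - a)"
  proof - have "b = a + (b - a)" using h by simp then show ?thesis by (metis power_add) qed
  have "j mod k ^ b = k^a * (j div k^a mod k^(b-a)) + j mod k^a" unfolding e by (rule mod_mult2_eq)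
  then have "j mod k ^ b div k ^ a = (j div k ^ a) mod k ^ (b - a)" using h by simp
  moreover have "k dvd k ^ (b - a)" using h by simp
  ultimately show ?thesis by (simp add: mod_mod_cancel)
qed

lemma vvec_char:
  fixes k :: nat
  assumes k2: "k \<ge> 2"
  shows "length (vvec k (Suc i)) = (k-1)*k^i \<and>
    (\<forall>j < (k-1)*k^i. vvec k (Suc i) ! j = 1 \<longleftrightarrow> (\<exists>a<i. j div k^a mod k = k-1))"
proof (induction i)
  case 0
  then show ?case by auto
next
  case (Suc i)
  let ?w = "vvec k (Suc i)"
  let ?b = "?w @ replicate (k ^ i) 1"
  have lw: "length ?w = (k-1)*k^i" using Suc by blast
  have lb: "length ?b = k^(Suc i)"
  proof -
    have "length ?b = (k-1)*k^i + k^i" using lw by simp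
    also have "\<dots> = (k-1+1)*k^i" by (simp add: distrib_right)
    also have "k-1+1 = k" using k2 by simp
    finally show ?thesis by simp
  qed
  have eq: "vvec k (Suc (Suc i)) = concat (replicate (k - 1) ?b)" by simp
  have len: "length (vvec k (Suc (Suc i))) = (k-1)*k^(Suc i)"
    unfolding eq using lb by (simp add: length_concat sum_list_replicate)
  have "vvec k (Suc (Suc i)) ! j = 1 \<longleftrightarrow> (\<exists>a<Suc i. j div k^a mod k = k-1)"
    if j: "j < (k-1)*k^(Suc i)" for j
  proof -
    define j' where "j' = j mod k^(Suc i)"
    have kp: "k > 0" using k2 by simp
    have j'lt: "j' < k^(Suc i)" unfolding j'_def using kp by simp
    have val: "vvec k (Suc (Suc i)) ! j = ?b ! j'"
      unfolding eq j'_def using j lb nth_concat_replicate[of j "k-1" ?b] by simp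
    have dig: "j' div k^a mod k = j div k^a mod k" if "a < Suc i" for a
      unfolding j'_def using digit_mod[OF that kp] .
    show ?thesis
    proof (cases "j' < (k-1)*k^i")
      case True
      have "?b ! j' = ?w ! j'" using True lw by (simp add: nth_append)
      also have "\<dots> = 1 \<longleftrightarrow> (\<exists>a<i. j' div k^a mod k = k-1)" using Suc True by blast
      also have "\<dots> \<longleftrightarrow> (\<exists>a<Suc i. j' div k^a mod k = k-1)"
      proof -
        have "j' div k^i < k - 1" using True by (simp add: less_mult_imp_div_less)
        then have "j' div k^i mod k \<noteq> k - 1" by (metis le_less_trans mod_less_eq_dividend nat_neq_iff)
        then show ?thesis using less_Suc_eq by auto
      qed
      also have "\<dots> \<longleftrightarrow> (\<exists>a<Suc i. j div k^a mod k = k-1)" using dig by auto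
      finally show ?thesis using val by simp
    next
      case False
      have "?b ! j' = 1" using False lw j'lt lb by (simp add: nth_append)
      moreover have "j' div k^i = k - 1"
      proof -
        have "j' div k^i \<ge> k - 1" 
        proof -
          have "(k-1)*k^i \<le> j'" using False by simp
          then have "(k-1)*k^i div k^i \<le> j' div k^i" by (rule div_le_mono)
          then show ?thesis using kp by simp
        qed
        moreover have "j' div k^i < k" using j'lt by (simp add: less_mult_imp_div_less mult.commute)
        ultimately show ?thesis using k2 by linarith
      qed
      then have "j div k^i mod k = k - 1" using dig[of i] k2 by simp
      ultimately show ?thesis using val by auto
    qed
  qed
  then show ?case using len by blast
qed

lemma pow_decomp:
  fixes k s :: nat
  assumes "k \<ge> 2" "s > 0"
  shows "\<exists>a s'. s = k^a * s' \<and> \<not> k dvd s'"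
  using assms(2)
proof (induction s rule: less_induct)
  case (less s)
  show ?case
  proof (cases "k dvd s")
    case True
    then obtain q where q: "s = k * q" by blast
    then have "q < s" "q > 0" using less.prems assms(1) by auto
    then obtain a s' where "q = k^a * s'" "\<not> k dvd s'" using less.IH by blast
    then show ?thesis using q by (metis mult.assoc power_Suc)
  next
    case False
    then show ?thesis by (metis mult_1 power_0)
  qed
qed

lemma hit_digit:
  fixes k s' X :: nat
  assumes "prime k" "\<not> k dvd s'"
  shows "\<exists>t<k. (X + t * s') mod k = k - 1"
proof -
  have k2: "k \<ge> 2" using assms(1) prime_ge_2_nat by blast
  have cop: "coprime s' k" using assms prime_imp_coprime_nat coprime_commute by blast
  have "s' \<noteq> 0" using assms(2) by (metis dvd_0_right)
  then obtain x y where xy: "s' * x = k * y + gcd s' k" using bezout_nat by blast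
  then have xy1: "s' * x = k * y + 1" using cop by simp
  define c where "c = k - 1 + (k - X mod k)"
  define t where "t = (c * x) mod k"
  have "t < k" unfolding t_def using k2 by simp
  have "(X + t * s') mod k = (X + c * x * s') mod k"
    unfolding t_def by (metis mod_add_right_eq mod_mult_left_eq)
  also have "c * x * s' = c * (k * y + 1)" using xy1 by (simp add: mult.commute mult.left_commute)
  also have "(X + c * (k * y + 1)) mod k = (X + c + k * (c * y)) mod k"
    by (simp add: algebra_simps)
  also have "\<dots> = (X + c) mod k" by simp
  also have "\<dots> = (X mod k + c) mod k" by (simp add: mod_add_left_eq)
  also have "X mod k + c = (k - 1) + k"
  proof -
    have "X mod k < k" using k2 by simp
    then show ?thesis unfolding c_def by linarith
  qed
  also have "((k - 1) + k) mod k = k - 1"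
  proof -
    have "((k - 1) + k) mod k = (k - 1) mod k" by (rule mod_add_self2)
    then show ?thesis using k2 by simp
  qed
  finally show ?thesis using \<open>t < k\<close> by blast
qed

theorem lemma3:
  fixes k i :: nat
  assumes "prime k" and "i \<ge> 1"
  shows "\<not> (\<exists>r s. s > 0 \<and> r + s * (k - 1) < n_val k i \<and>
             {r + t * s | t. t \<le> k - 1} \<inter> supp_v k i = {})"
proof
  assume "\<exists>r s. s > 0 \<and> r + s * (k - 1) < n_val k i \<and>
             {r + t * s | t. t \<le> k - 1} \<inter> supp_v k i = {}"
  then obtain r s where s0: "s > 0" and rs: "r + s * (k - 1) < n_val k i"
    and disj: "{r + t * s | t. t \<le> k - 1} \<inter> supp_v k i = {}" by blast
  have k2: "k \<ge> 2" using assms(1) prime_ge_2_nat by blast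
  have kp: "k > 0" using k2 by simp
  obtain i' where i': "i = Suc i'" using assms(2) by (cases i) auto
  note ch = vvec_char[OF k2, of i']
  have nle: "n_val k i \<le> (k-1)*k^i'"
  proof -
    have "(k-2)*k^i + 1 \<le> (k-2)*k^i + k^i'" using kp by simp
    also have "\<dots> = (k-1)*((k-1)*k^i')"
    proof -
      obtain m where m: "k = m + 2" using k2 le_Suc_ex by (metis add.commute)
      have "(k-1)*(k-1) = (k-2)*k + 1" unfolding m by (simp add: algebra_simps)
      then have "(k-1)*((k-1)*k^i') = ((k-2)*k + 1)*k^i'" by (metis mult.assoc)
      then show ?thesis using i' by (simp add: algebra_simps)
    qed
    finally have "(k-2)*k^i + 1 \<le> (k-1)*((k-1)*k^i')" .
    then have "((k-2)*k^i + 1) div (k-1) \<le> (k-1)*((k-1)*k^i') div (k-1)" by (rule div_le_mono)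
    then show ?thesis unfolding n_val_def using k2 by simp
  qed
  obtain a s' where ss: "s = k^a * s'" and nd: "\<not> k dvd s'" using pow_decomp[OF k2 s0] by blast
  obtain t where t: "t < k" and td: "(r div k^a + t * s') mod k = k - 1"
    using hit_digit[OF assms(1) nd] by blast
  define x where "x = r + t * s"
  have tk: "t \<le> k - 1" using t by simp
  have "t * s \<le> (k-1) * s" using tk by (rule mult_le_mono1)
  then have "x \<le> r + s * (k-1)" unfolding x_def by (simp add: mult.commute)
  then have xlt: "x < (k-1)*k^i'" using rs nle by linarith
  have "x div k^a = r div k^a + t * s'"
  proof -
    have "x = r + (t * s') * k^a" unfolding x_def ss by (simp add: mult.commute mult.left_commute)
    moreover have "(r + (t * s') * k^a) div k^a = r div k^a + t * s'"
    proof -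
      have "k^a \<noteq> 0" using kp by simp
      then have "(r + t * s' * k^a) div k^a = t * s' + r div k^a" by (rule div_mult_self1)
      then show ?thesis by (simp only: add.commute)
    qed
    ultimately show ?thesis by simp
  qed
  then have xd: "x div k^a mod k = k - 1" using td by simp
  have "a < i'"
  proof (rule ccontr)
    assume "\<not> a < i'"
    then have ia: "i' \<le> a" by simp
    have "k^i' \<le> k^a" using ia by (rule power_increasing) (use kp in simp)
    moreover have "0 < k^i'" using kp by simp
    ultimately have "x div k^a \<le> x div k^i'" by (intro div_le_mono2)
    moreover have "x div k^i' < k - 1" by (rule less_mult_imp_div_less[OF xlt])
    moreover have "x div k^a mod k \<le> x div k^a" by (rule mod_less_eq_dividend)
    ultimately have "x div k^a mod k < k - 1" by linarith
    then show False using xd by simp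
  qed
  have iff: "vvec k (Suc i') ! x = 1 \<longleftrightarrow> (\<exists>a<i'. x div k^a mod k = k-1)"
    using conjunct2[OF ch] xlt by blast
  have lenv: "x < length (vvec k (Suc i'))" using conjunct1[OF ch] xlt by simp
  have "vvec k (Suc i') ! x = 1" using iff xd \<open>a < i'\<close> by blast
  then have "x \<in> supp_v k i" unfolding supp_v_def i' using lenv by simp
  moreover have "x \<in> {r + t * s | t. t \<le> k - 1}" unfolding x_def using tk by blast
  ultimately show False using disj by blast
qed

end
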